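(* Let $n\geq1$. In $M_n$, both the left-lcm and the right-lcm of the generators $\rho_1,\rho_2,\dots,\rho_n$ are equal to $\rho_n^{\,n}=\rho_1(\rho_n\rho_1)^{n-1}$.
   Context: $M_n$ denotes the monoid with generators $\rho_1,\dots,\rho_n$ and relations $\rho_1\rho_n\rho_i=\rho_{i+1}\rho_n$ for $1\leq i\leq n-1$. The right-lcm of a set of elements is a common right-multiple of all of them that left-divides every common right-multiple; the left-lcm is defined symmetrically with left-multiples and right-divisibility. *)

theory Defs
  imports Main
begin

text \<open>The monoid M_n is presented by generators rho_1..rho_n, encoded as the letters
  1..n of words (nat lists), modulo the congruence generated by the relations
  rho_1 rho_n rho_i = rho_(i+1) rho_n for 1 <= i <= n-1.\<close>

definition Mword :: "nat \<Rightarrow> nat list \<Rightarrow> bool" where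
  "Mword n w \<longleftrightarrow> set w \<subseteq> {1..n}"

definition Mrel :: "nat \<Rightarrow> (nat list \<times> nat list) set" where
  "Mrel n = {([1, n, i], [i + 1, n]) | i. 1 \<le> i \<and> i \<le> n - 1}"

inductive Meq :: "nat \<Rightarrow> nat list \<Rightarrow> nat list \<Rightarrow> bool" for n where
  step: "(l, r) \<in> Mrel n \<Longrightarrow> Meq n (u @ l @ v) (u @ r @ v)"
| refl: "Meq n w w"
| sym: "Meq n u v \<Longrightarrow> Meq n v u"
| trans: "Meq n u v \<Longrightarrow> Meq n v w \<Longrightarrow> Meq n u w"

definition Mldiv :: "nat \<Rightarrow> nat list \<Rightarrow> nat list \<Rightarrow> bool" where
  "Mldiv n a b \<longleftrightarrow> (\<exists>c. Mword n c \<and> Meq n (a @ c) b)"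

definition Mrdiv :: "nat \<Rightarrow> nat list \<Rightarrow> nat list \<Rightarrow> bool" where
  "Mrdiv n a b \<longleftrightarrow> (\<exists>c. Mword n c \<and> Meq n (c @ a) b)"

definition is_right_lcm :: "nat \<Rightarrow> nat list set \<Rightarrow> nat list \<Rightarrow> bool" where
  "is_right_lcm n S m \<longleftrightarrow> Mword n m \<and> (\<forall>s\<in>S. Mldiv n s m) \<and>
     (\<forall>m'. Mword n m' \<and> (\<forall>s\<in>S. Mldiv n s m') \<longrightarrow> Mldiv n m m')"

definition is_left_lcm :: "nat \<Rightarrow> nat list set \<Rightarrow> nat list \<Rightarrow> bool" where
  "is_left_lcm n S m \<longleftrightarrow> Mword n m \<and> (\<forall>s\<in>S. Mrdiv n s m) \<and>
     (\<forall>m'. Mword n m' \<and> (\<forall>s\<in>S. Mrdiv n s m') \<longrightarrow> Mrdiv n m m')"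

end

theory Submission
  imports Defs
begin

declare Meq.trans[trans]

lemma Meq_ctx: "Meq n x y \<Longrightarrow> Meq n (a @ x @ b) (a @ y @ b)"
proof (induction rule: Meq.induct)
  case (step l r u v)
  have "Meq n ((a @ u) @ l @ (v @ b)) ((a @ u) @ r @ (v @ b))" by (rule Meq.step[OF step])
  then show ?case by simp
next
  case (refl w) then show ?case by (rule Meq.refl)
next
  case (sym u v) then show ?case by (simp add: Meq.sym)
next
  case (trans u v w) then show ?case by (metis Meq.trans)
qed

lemma Meq_appL: "Meq n x y \<Longrightarrow> Meq n (a @ x) (a @ y)"
  using Meq_ctx[of n x y a "[]"] by simp
lemma Meq_appR: "Meq n x y \<Longrightarrow> Meq n (x @ b) (y @ b)"
  using Meq_ctx[of n x y "[]" b] by simp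
lemma Meq_Cons: "Meq n x y \<Longrightarrow> Meq n (a # x) (a # y)"
  using Meq_appL[of n x y "[a]"] by simp

lemma rel1: "1 \<le> i \<Longrightarrow> i \<le> n - 1 \<Longrightarrow> Meq n (u @ [1,n,i] @ v) (u @ [i+1,n] @ v)"
  by (rule Meq.step) (auto simp: Mrel_def)

lemma Meq_inv: "Meq n x y \<Longrightarrow> (Mword n x \<longleftrightarrow> Mword n y) \<and> sum_list x = sum_list y"
proof (induction rule: Meq.induct)
  case (step l r u v)
  then obtain i where "l = [1,n,i]" "r = [i+1,n]" "1 \<le> i" "i \<le> n - 1" by (auto simp: Mrel_def)
  then show ?case by (auto simp: Mword_def)
qed auto

lemma R: "1 \<le> i \<Longrightarrow> i < j \<Longrightarrow> j \<le> n \<Longrightarrow>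
   Meq n (i # replicate i n @ [j-i]) (j # replicate i n)"
proof (induction i arbitrary: j)
  case 0 then show ?case by simp
next
  case (Suc i)
  show ?case
  proof (cases "i = 0")
    case True
    then have "Meq n ([] @ [1,n,j-1] @ []) ([] @ [j-1+1,n] @ [])"
      using Suc.prems by (intro rel1) auto
    then show ?thesis using True Suc.prems by simp
  next
    case False
    have "Meq n (Suc i # replicate (Suc i) n @ [j - Suc i]) ([] @ [i+1,n] @ (replicate i n @ [j - Suc i]))"
      by (simp add: Meq.refl)
    also have "Meq n \<dots> ([] @ [1,n,i] @ (replicate i n @ [j - Suc i]))"
      by (rule Meq.sym, rule rel1) (insert False Suc.prems, auto)
    also have "\<dots> = [1,n] @ (i # replicate i n @ [(j-1) - i])" by simp
    also have "Meq n \<dots> ([1,n] @ ((j-1) # replicate i n))"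
      using False Suc.prems by (intro Meq_appL Suc.IH) auto
    also have "\<dots> = [] @ [1,n,j-1] @ replicate i n" by simp
    also have "Meq n \<dots> ([] @ [j-1+1,n] @ replicate i n)"
      using Suc.prems by (intro rel1) auto
    also have "\<dots> = j # replicate (Suc i) n" using Suc.prems by simp
    finally show ?thesis .
  qed
qed

lemma Meq_ctx': "Meq n x y \<Longrightarrow> a @ x @ b = p \<Longrightarrow> a @ y @ b = q \<Longrightarrow> Meq n p q"
  using Meq_ctx by blast

lemma Meq_word: "Meq n x y \<Longrightarrow> Mword n x \<Longrightarrow> Mword n y"
  using Meq_inv by blast
lemma Meq_sum: "Meq n x y \<Longrightarrow> sum_list x = sum_list y"
  using Meq_inv by blast

lemma Mword_app: "Mword n (x @ y) \<longleftrightarrow> Mword n x \<and> Mword n y"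
  by (auto simp: Mword_def)
lemma Mword_Cons: "Mword n (a # y) \<longleftrightarrow> a \<in> {1..n} \<and> Mword n y"
  by (auto simp: Mword_def)

definition F :: "nat \<Rightarrow> nat \<Rightarrow> nat list" where
  "F n k = (if k = 0 then [] else k # replicate k n)"

lemma FA: "1 \<le> a \<Longrightarrow> a + m \<le> n \<Longrightarrow> Meq n (F n m @ [a]) ((a+m) # replicate m n)"
proof (cases "m = 0")
  case True then show ?thesis by (simp add: F_def Meq.refl)
next
  case False
  assume "1 \<le> a" "a + m \<le> n"
  then have "Meq n (m # replicate m n @ [(a+m) - m]) ((a+m) # replicate m n)"
    using False by (intro R) auto
  then show ?thesis using False by (simp add: F_def)
qed

lemma FB: "1 \<le> m \<Longrightarrow> m \<le> n \<Longrightarrow> Meq n (F n (m-1) @ [n+1-m]) (replicate m n)"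
proof (cases "m = 1")
  case True then show ?thesis by (simp add: F_def Meq.refl)
next
  case False
  assume "1 \<le> m" "m \<le> n"
  then have "Meq n ((m-1) # replicate (m-1) n @ [n - (m-1)]) (n # replicate (m-1) n)"
    using False by (intro R) auto
  moreover have "n # replicate (m-1) n = replicate m n" using \<open>1 \<le> m\<close>
    by (metis Suc_diff_1 less_le_trans replicate_Suc zero_less_one)
  ultimately show ?thesis using False \<open>1 \<le> m\<close> \<open>m \<le> n\<close> by (simp add: F_def)
qed

lemma FF: "x + y \<le> n \<Longrightarrow> Meq n (F n x @ F n y) (F n (x+y))"
proof -
  assume h: "x + y \<le> n"
  show ?thesis
  proof (cases "x = 0 \<or> y = 0")
    case True then show ?thesis by (auto simp: F_def Meq.refl)
  next
    case False
    have "Meq n (x # replicate x n @ [(x+y) - x]) ((x+y) # replicate x n)"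
      using False h by (intro R) auto
    then have "Meq n ((x # replicate x n @ [(x+y) - x]) @ replicate y n) (((x+y) # replicate x n) @ replicate y n)"
      by (rule Meq_appR)
    then show ?thesis using False by (simp add: F_def replicate_add)
  qed
qed

definition cL :: "nat \<Rightarrow> nat \<Rightarrow> nat list \<Rightarrow> nat \<Rightarrow> nat list \<Rightarrow> bool" where
  "cL n a u b v \<longleftrightarrow> (a = b \<and> Meq n u v)
     \<or> (a < b \<and> (\<exists>t. Meq n u (replicate a n @ [b-a] @ t) \<and> Meq n v (replicate a n @ t)))
     \<or> (b < a \<and> (\<exists>t. Meq n v (replicate b n @ [a-b] @ t) \<and> Meq n u (replicate b n @ t)))"

lemma cL_sym: "cL n a u b v \<Longrightarrow> cL n b v a u"
  unfolding cL_def by (auto intro: Meq.sym)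

lemma cL_congL: "Meq n u u' \<Longrightarrow> cL n a u' c w \<Longrightarrow> cL n a u c w"
  unfolding cL_def by (meson Meq.trans)
lemma cL_congR: "Meq n w w' \<Longrightarrow> cL n a u c w' \<Longrightarrow> cL n a u c w"
  unfolding cL_def by (meson Meq.trans Meq.sym)

lemma cL_eq: "cL n a u a v \<Longrightarrow> Meq n u v"
  unfolding cL_def by auto

lemma canL:
  assumes IH: "\<And>x y a u b v. Mword n x \<Longrightarrow> sum_list x < W \<Longrightarrow> Meq n x y \<Longrightarrow> x = a#u \<Longrightarrow> y = b#v \<Longrightarrow> cL n a u b v"
  shows "Mword n (z @ t) \<Longrightarrow> sum_list (z @ t) < W \<Longrightarrow> Meq n (z @ t) (z @ s) \<Longrightarrow> Meq n t s"
proof (induction z)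
  case Nil then show ?case by simp
next
  case (Cons d z)
  have "cL n d (z @ t) d (z @ s)" using IH[OF Cons.prems(1,2,3)] by simp
  then have "Meq n (z @ t) (z @ s)" by (rule cL_eq)
  then show ?case using Cons by (auto simp: Mword_Cons)
qed

locale LIH =
  fixes n W :: nat
  assumes IH: "\<And>x y a u b v. Mword n x \<Longrightarrow> sum_list x < W \<Longrightarrow> Meq n x y \<Longrightarrow> x = a#u \<Longrightarrow> y = b#v \<Longrightarrow> cL n a u b v"
begin

lemma can: "Mword n (z @ t) \<Longrightarrow> sum_list (z @ t) < W \<Longrightarrow> Meq n (z @ t) (z @ s) \<Longrightarrow> Meq n t s"
proof (induction z)
  case Nil then show ?case by simp
next
  case (Cons d z)
  have "cL n d (z @ t) d (z @ s)" using IH[OF Cons.prems(1,2,3)] by simp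
  then have "Meq n (z @ t) (z @ s)" by (rule cL_eq)
  then show ?case using Cons by (auto simp: Mword_Cons)
qed

lemma L3:
  assumes mv: "Mword n v" and wv: "sum_list v < W"
    and ab: "cL n a u b v" and bc: "cL n b v c w" and o: "a < b" "b < c" "c \<le> n"
  shows "cL n a u c w"
proof -
  from ab o obtain t where u1: "Meq n u (replicate a n @ [b-a] @ t)" and v1: "Meq n v (replicate a n @ t)"
    unfolding cL_def by auto
  from bc o obtain s where v2: "Meq n v (replicate b n @ [c-b] @ s)" and w2: "Meq n w (replicate b n @ s)"
    unfolding cL_def by auto
  have rb: "replicate b n = replicate a n @ replicate (b-a) n" using o by (simp add: replicate_add[symmetric])
  have e: "Meq n (replicate a n @ t) (replicate a n @ (replicate (b-a) n @ [c-b] @ s))"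
    using Meq.trans[OF Meq.sym[OF v1] v2] rb by simp
  have m1: "Mword n (replicate a n @ t)" using Meq_word[OF v1 mv] .
  have s1: "sum_list (replicate a n @ t) < W" using Meq_sum[OF v1] wv by simp
  have t1: "Meq n t (replicate (b-a) n @ [c-b] @ s)" using can[OF m1 s1 e] .
  have "Meq n u (replicate a n @ [b-a] @ t)" by (rule u1)
  also have "Meq n \<dots> (replicate a n @ [b-a] @ (replicate (b-a) n @ [c-b] @ s))"
    by (rule Meq_ctx'[OF t1, of "replicate a n @ [b-a]" "[]"]) simp_all
  also have "Meq n \<dots> (replicate a n @ ((c-a) # replicate (b-a) n) @ s)"
  proof -
    have "Meq n ((b-a) # replicate (b-a) n @ [(c-a)-(b-a)]) ((c-a) # replicate (b-a) n)"
      using o by (intro R) auto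
    moreover have "(c-a)-(b-a) = c - b" using o by simp
    ultimately have "Meq n ((b-a) # replicate (b-a) n @ [c-b]) ((c-a) # replicate (b-a) n)" by simp
    then show ?thesis by (rule Meq_ctx'[where a="replicate a n" and b=s]) simp_all
  qed
  finally have u2: "Meq n u (replicate a n @ [c-a] @ (replicate (b-a) n @ s))" by simp
  have w3: "Meq n w (replicate a n @ (replicate (b-a) n @ s))" using w2 rb by simp
  show ?thesis unfolding cL_def using o u2 w3 by auto
qed

lemma L5:
  assumes mv: "Mword n v" and wv: "sum_list v < W"
    and ab: "cL n a u b v" and bc: "cL n b v c w" and o: "a < b" "c < b" "a < c" "b \<le> n"
  shows "cL n a u c w"
proof -
  from ab o obtain t where u1: "Meq n u (replicate a n @ [b-a] @ t)" and v1: "Meq n v (replicate a n @ t)"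
    unfolding cL_def by auto
  from bc o obtain s where w2: "Meq n w (replicate c n @ [b-c] @ s)" and v2: "Meq n v (replicate c n @ s)"
    unfolding cL_def by auto
  have rc: "replicate c n = replicate a n @ replicate (c-a) n" using o by (simp add: replicate_add[symmetric])
  have e: "Meq n (replicate a n @ t) (replicate a n @ (replicate (c-a) n @ s))"
    using Meq.trans[OF Meq.sym[OF v1] v2] rc by simp
  have m1: "Mword n (replicate a n @ t)" using Meq_word[OF v1 mv] .
  have s1: "sum_list (replicate a n @ t) < W" using Meq_sum[OF v1] wv by simp
  have t1: "Meq n t (replicate (c-a) n @ s)" using can[OF m1 s1 e] .
  have "Meq n u (replicate a n @ [b-a] @ t)" by (rule u1)
  also have "Meq n \<dots> (replicate a n @ [b-a] @ (replicate (c-a) n @ s))"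
    by (rule Meq_ctx'[OF t1, of "replicate a n @ [b-a]" "[]"]) simp_all
  also have "Meq n \<dots> (replicate a n @ ((c-a) # replicate (c-a) n @ [b-c]) @ s)"
  proof -
    have "Meq n ((c-a) # replicate (c-a) n @ [(b-a)-(c-a)]) ((b-a) # replicate (c-a) n)"
      using o by (intro R) auto
    moreover have "(b-a)-(c-a) = b - c" using o by simp
    ultimately have "Meq n ((b-a) # replicate (c-a) n) ((c-a) # replicate (c-a) n @ [b-c])" by (simp add: Meq.sym)
    then show ?thesis by (rule Meq_ctx'[where a="replicate a n" and b=s]) simp_all
  qed
  finally have u2: "Meq n u (replicate a n @ [c-a] @ (replicate (c-a) n @ [b-c] @ s))" by simp
  have w3: "Meq n w (replicate a n @ (replicate (c-a) n @ [b-c] @ s))" using w2 rc by simp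
  show ?thesis unfolding cL_def using o u2 w3 by auto
qed

lemma L5e:
  assumes mv: "Mword n v" and wv: "sum_list v < W"
    and ab: "cL n a u b v" and bc: "cL n b v a w" and o: "a < b"
  shows "cL n a u a w"
proof -
  from ab o obtain t where u1: "Meq n u (replicate a n @ [b-a] @ t)" and v1: "Meq n v (replicate a n @ t)"
    unfolding cL_def by auto
  from bc o obtain s where w2: "Meq n w (replicate a n @ [b-a] @ s)" and v2: "Meq n v (replicate a n @ s)"
    unfolding cL_def by auto
  have m1: "Mword n (replicate a n @ t)" using Meq_word[OF v1 mv] .
  have s1: "sum_list (replicate a n @ t) < W" using Meq_sum[OF v1] wv by simp
  have t1: "Meq n t s" using can[OF m1 s1 Meq.trans[OF Meq.sym[OF v1] v2]] .
  have "Meq n u w"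
    using Meq.trans[OF u1 Meq.trans[OF Meq_ctx'[OF t1, of "replicate a n @ [b-a]" "[]"] Meq.sym[OF w2]]] by simp
  then show ?thesis unfolding cL_def by auto
qed

lemma L6:
  assumes mv: "Mword n v" and wv: "sum_list v < W"
    and ab: "cL n a u b v" and bc: "cL n b v c w" and o: "b < a" "b < c" "a \<le> c"
  shows "cL n a u c w"
proof -
  from ab o obtain t where v1: "Meq n v (replicate b n @ [a-b] @ t)" and u1: "Meq n u (replicate b n @ t)"
    unfolding cL_def by auto
  from bc o obtain s where v2: "Meq n v (replicate b n @ [c-b] @ s)" and w2: "Meq n w (replicate b n @ s)"
    unfolding cL_def by auto
  have m1: "Mword n (replicate b n @ [a-b] @ t)" using Meq_word[OF v1 mv] .
  have s1: "sum_list (replicate b n @ [a-b] @ t) < W" using Meq_sum[OF v1] wv by simp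
  have e: "Meq n ([a-b] @ t) ([c-b] @ s)" using can[OF m1 s1 Meq.trans[OF Meq.sym[OF v1] v2]] .
  have m2: "Mword n ((a-b) # t)" using m1 by (simp add: Mword_app)
  have s2: "sum_list ((a-b) # t) < W" using s1 by simp
  have c1: "cL n (a-b) t (c-b) s" using IH[OF m2 s2] e by simp
  show ?thesis
  proof (cases "a = c")
    case True
    then have "Meq n t s" using c1 cL_eq by simp
    then have "Meq n u w" using Meq.trans[OF u1 Meq.trans[OF Meq_ctx'[OF \<open>Meq n t s\<close>, of "replicate b n" "[]"] Meq.sym[OF w2]]] by simp
    then show ?thesis using True unfolding cL_def by auto
  next
    case False
    then have ac: "a < c" using o by simp
    with c1 o obtain r where t2: "Meq n t (replicate (a-b) n @ [c-a] @ r)" and s2: "Meq n s (replicate (a-b) n @ r)"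
      unfolding cL_def by auto
    have ra: "replicate a n = replicate b n @ replicate (a-b) n" using o by (simp add: replicate_add[symmetric])
    have "Meq n u (replicate a n @ [c-a] @ r)"
      using Meq.trans[OF u1 Meq_ctx'[OF t2, of "replicate b n" "[]"]] ra by simp
    moreover have "Meq n w (replicate a n @ r)"
      using Meq.trans[OF w2 Meq_ctx'[OF s2, of "replicate b n" "[]"]] ra by simp
    ultimately show ?thesis unfolding cL_def using ac by auto
  qed
qed

lemma L6e:
  assumes mv: "Mword n v" and wv: "sum_list v < W"
    and ab: "cL n a u b v" and bc: "cL n b v a w" and o: "b < a"
  shows "cL n a u a w"
  using L6[OF mv wv ab bc] o by simp

lemma transL:
  assumes mv: "Mword n v" and wv: "sum_list v < W"
    and ab: "cL n a u b v" and bc: "cL n b v c w" and r: "1 \<le> a" "1 \<le> b" "1 \<le> c" "a \<le> n" "b \<le> n" "c \<le> n"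
  shows "cL n a u c w"
proof (cases a b rule: linorder_cases)
  case equal then show ?thesis using ab bc cL_congL cL_eq by blast
next
  case less
  show ?thesis
  proof (cases b c rule: linorder_cases)
    case less2: less then show ?thesis using L3[OF mv wv ab bc] less r by auto
  next
    case equal then show ?thesis using ab bc cL_congR cL_eq cL_sym by metis
  next
    case greater
    show ?thesis
    proof (cases a c rule: linorder_cases)
      case less3: less then show ?thesis using L5[OF mv wv ab bc] less greater r by auto
    next
      case equal then show ?thesis using L5e[OF mv wv ab] bc less by auto
    next
      case greater3: greater then show ?thesis using cL_sym[OF L5[OF mv wv cL_sym[OF bc] cL_sym[OF ab]]] less greater r by auto
    qed
  qed
next
  case greater
  show ?thesis
  proof (cases b c rule: linorder_cases)
    case less2: less
    show ?thesis
    proof (cases a c rule: linorder_cases)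
      case less3: less then show ?thesis using L6[OF mv wv ab bc] less2 greater r by auto
    next
      case equal then show ?thesis using L6e[OF mv wv ab] bc greater by auto
    next
      case greater3: greater then show ?thesis using cL_sym[OF L6[OF mv wv cL_sym[OF bc] cL_sym[OF ab]]] less2 greater r by auto
    qed
  next
    case equal then show ?thesis using ab bc cL_congR cL_eq cL_sym by metis
  next
    case greater2: greater then show ?thesis using cL_sym[OF L3[OF mv wv cL_sym[OF bc] cL_sym[OF ab]]] greater r by auto
  qed
qed

end

lemma mainL_step:
  assumes IHW0: "\<forall>x y a u b v. Mword n x \<longrightarrow> sum_list x < W \<longrightarrow> Meq n x y \<longrightarrow> x = a#u \<longrightarrow> y = b#v \<longrightarrow> cL n a u b v"
  shows "Meq n x y \<Longrightarrow> Mword n x \<Longrightarrow> sum_list x = W \<Longrightarrow> (\<forall>a u b v. x = a#u \<longrightarrow> y = b#v \<longrightarrow> cL n a u b v)"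
proof (induction rule: Meq.induct)
  case (step l r u' v')
  then obtain i where lr: "l = [1,n,i]" "r = [i+1,n]" "1 \<le> i" "i \<le> n - 1" by (auto simp: Mrel_def)
  show ?case
  proof (intro allI impI)
    fix a u b v assume x: "u' @ l @ v' = a # u" and y: "u' @ r @ v' = b # v"
    show "cL n a u b v"
    proof (cases u')
      case Nil
      then have "a = 1" "u = n # i # v'" "b = i+1" "v = n # v'" using x y lr by auto
      then show ?thesis unfolding cL_def using lr by (auto intro: Meq.refl)
    next
      case (Cons d u'')
      then have "a = d" "b = d" "u = u'' @ l @ v'" "v = u'' @ r @ v'" using x y by auto
      moreover have "Meq n (u'' @ l @ v') (u'' @ r @ v')" by (rule Meq.step[OF step.hyps])
      ultimately show ?thesis unfolding cL_def by auto
    qed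
  qed
next
  case (refl w)
  then show ?case unfolding cL_def by (auto intro: Meq.refl)
next
  case (sym u0 v0)
  have "Mword n u0" using Meq_word[OF Meq.sym[OF sym.hyps] sym.prems(1)] .
  moreover have "sum_list u0 = W" using Meq_sum[OF sym.hyps] sym.prems(2) by simp
  ultimately show ?case using sym.IH cL_sym by blast
next
  case (trans u0 v0 w0)
  have mv0: "Mword n v0" using Meq_word[OF trans.hyps(1) trans.prems(1)] .
  have sv0: "sum_list v0 = W" using Meq_sum[OF trans.hyps(1)] trans.prems(2) by simp
  show ?case
  proof (intro allI impI)
    fix a u c w assume x: "u0 = a # u" and z: "w0 = c # w"
    have "1 \<le> a" using trans.prems(1) x by (simp add: Mword_Cons)
    then have "W > 0" using trans.prems(2) x by simp
    then obtain b v where v0: "v0 = b # v" using sv0 by (cases v0) auto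
    have ab: "cL n a u b v" using trans.IH(1) trans.prems x v0 by blast
    have bc: "cL n b v c w" using trans.IH(2) mv0 sv0 z v0 by blast
    have mz: "Mword n w0" using Meq_word[OF trans.hyps(2) mv0] .
    interpret LIH n W using IHW0 by unfold_locales blast
    show "cL n a u c w"
      by (rule transL[OF _ _ ab bc]) (use mv0 sv0 v0 trans.prems(1) x mz z in \<open>auto simp: Mword_Cons\<close>)
  qed
qed

lemma mainL: "Mword n x \<Longrightarrow> Meq n x y \<Longrightarrow> x = a#u \<Longrightarrow> y = b#v \<Longrightarrow> cL n a u b v"
proof (induction "sum_list x" arbitrary: x y a u b v rule: less_induct)
  case less
  have IHW: "\<forall>x' y' a' u' b' v'. Mword n x' \<longrightarrow> sum_list x' < sum_list x \<longrightarrow> Meq n x' y' \<longrightarrow> x' = a'#u' \<longrightarrow> y' = b'#v' \<longrightarrow> cL n a' u' b' v'"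
    using less.hyps by blast
  show ?case using mainL_step[where W="sum_list x", OF IHW less.prems(2,1)] less.prems(3,4) by blast
qed


definition cR :: "nat \<Rightarrow> nat \<Rightarrow> nat list \<Rightarrow> nat \<Rightarrow> nat list \<Rightarrow> bool" where
  "cR n a u b v \<longleftrightarrow> (a = b \<and> Meq n u v)
     \<or> (a < b \<and> (\<exists>t. Meq n u (t @ F n (n+1-b)) \<and> Meq n v (t @ (a + (n+1-b)) # F n (n-b))))
     \<or> (b < a \<and> (\<exists>t. Meq n v (t @ F n (n+1-a)) \<and> Meq n u (t @ (b + (n+1-a)) # F n (n-a))))"

lemma cR_sym: "cR n a u b v \<Longrightarrow> cR n b v a u"
  unfolding cR_def by (auto intro: Meq.sym)
lemma cR_congL: "Meq n u u' \<Longrightarrow> cR n a u' c w \<Longrightarrow> cR n a u c w"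
  unfolding cR_def by (meson Meq.trans Meq.sym)
lemma cR_congR: "Meq n w w' \<Longrightarrow> cR n a u c w' \<Longrightarrow> cR n a u c w"
  unfolding cR_def by (meson Meq.trans Meq.sym)
lemma cR_eq: "cR n a u a v \<Longrightarrow> Meq n u v"
  unfolding cR_def by auto

lemma F_Suc: "F n (Suc k) = Suc k # replicate k n @ [n]"
  by (simp add: F_def replicate_append_same)

locale RIH =
  fixes n W :: nat
  assumes IH: "\<And>x y a u b v. Mword n x \<Longrightarrow> sum_list x < W \<Longrightarrow> Meq n x y \<Longrightarrow> x = u@[a] \<Longrightarrow> y = v@[b] \<Longrightarrow> cR n a u b v"
begin

lemma can: "Mword n (t @ z) \<Longrightarrow> sum_list (t @ z) < W \<Longrightarrow> Meq n (t @ z) (s @ z) \<Longrightarrow> Meq n t s"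
proof (induction z rule: rev_induct)
  case Nil then show ?case by simp
next
  case (snoc d z)
  have "cR n d (t @ z) d (s @ z)" using IH[OF snoc.prems(1,2,3)] by simp
  then have "Meq n (t @ z) (s @ z)" by (rule cR_eq)
  then show ?case using snoc by (auto simp: Mword_app)
qed

lemma it: "1 \<le> p \<Longrightarrow> p + k \<le> n \<Longrightarrow> Mword n (x @ (p+k) # replicate k n) \<Longrightarrow>
    sum_list (x @ (p+k) # replicate k n) < W \<Longrightarrow>
    Meq n (x @ (p+k) # replicate k n) (y @ [p]) \<Longrightarrow> Meq n y (x @ F n k)"
proof (induction k arbitrary: p y)
  case 0
  have "cR n p x p y" using IH[OF 0(3,4,5)] by simp
  then show ?case by (simp add: F_def cR_eq Meq.sym)
next
  case (Suc k)
  have e: "x @ (p + Suc k) # replicate (Suc k) n = (x @ (p + Suc k) # replicate k n) @ [n]"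
    by (simp add: replicate_append_same[symmetric])
  have "cR n n (x @ (p + Suc k) # replicate k n) p y"
    using IH[OF Suc.prems(3,4,5)] e by simp
  moreover have "p < n" using Suc.prems by simp
  ultimately obtain t where y1: "Meq n y (t @ F n 1)" and x1: "Meq n (x @ (p + Suc k) # replicate k n) (t @ [p+1])"
    unfolding cR_def by (auto simp: F_def)
  have pk: "p + Suc k = (p+1) + k" by simp
  have mw: "Mword n (x @ ((p+1) + k) # replicate k n)" using Suc.prems(3) pk
    by (simp add: Mword_app Mword_Cons)
  have sw: "sum_list (x @ ((p+1) + k) # replicate k n) < W" using Suc.prems(4) pk by simp
  have t1: "Meq n t (x @ F n k)"
    using Suc.IH[of "p+1" t] Suc.prems(2) mw sw x1 pk by (simp add: Meq.sym)
  have "Meq n y (t @ [1, n])" using y1 by (simp add: F_def)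
  also have "Meq n \<dots> ((x @ F n k) @ [1, n])" by (rule Meq_appR[OF t1])
  also have "Meq n \<dots> (x @ ((1 + k) # replicate k n) @ [n])"
  proof -
    have "Meq n (F n k @ [1]) ((1 + k) # replicate k n)" using FA[of 1 k n] Suc.prems(2) by simp
    then show ?thesis by (rule Meq_ctx'[where a=x and b="[n]"]) simp_all
  qed
  also have "\<dots> = x @ F n (Suc k)" by (simp add: F_Suc)
  finally show ?case .
qed

lemma R3:
  assumes mv: "Mword n v" and wv: "sum_list v < W"
    and ab: "cR n a u b v" and bc: "cR n b v c w" and o: "1 \<le> a" "a < b" "b < c" "c \<le> n"
  shows "cR n a u c w"
proof -
  define mb where "mb = n+1-b"
  define mc where "mc = n+1-c"
  define k where "k = c-b-1"
  from ab o obtain t where u1: "Meq n u (t @ F n mb)" and v1: "Meq n v (t @ (a+mb) # F n (n-b))"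
    unfolding cR_def mb_def by auto
  from bc o obtain s where v2: "Meq n v (s @ F n mc)" and w2: "Meq n w (s @ (b+mc) # F n (n-c))"
    unfolding cR_def mc_def by auto
  have ar: "n - b = k + mc" "mb = k + 1 + mc" "b + mc = n - k" "a + mc + (k+1) = a + mb" "a + mb \<le> n" "1 \<le> mc"
    "mc + k \<le> n" "n - c = mc - 1" "k + 1 + mc \<le> n"
    using o unfolding mb_def mc_def k_def by auto
  have F1: "F n (n-b) = (mc + k) # replicate k n @ replicate mc n"
    using ar by (simp add: F_def replicate_add add.commute)
  have F2: "F n mc = mc # replicate mc n" using ar by (simp add: F_def)
  have e: "Meq n ((t @ [a+mb] @ (mc + k) # replicate k n) @ replicate mc n) ((s @ [mc]) @ replicate mc n)"
    using Meq.trans[OF Meq.sym[OF v1] v2] F1 F2 by simp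
  have m1: "Mword n ((t @ [a+mb] @ (mc + k) # replicate k n) @ replicate mc n)"
    using Meq_word[OF v1 mv] F1 by simp
  have s1: "sum_list ((t @ [a+mb] @ (mc + k) # replicate k n) @ replicate mc n) < W"
    using Meq_sum[OF v1] wv F1 by simp
  have e2: "Meq n (t @ [a+mb] @ (mc + k) # replicate k n) (s @ [mc])" using can[OF m1 s1 e] .
  have s2: "Meq n s ((t @ [a+mb]) @ F n k)"
    by (rule it[of mc k]) (use ar e2 m1 s1 in \<open>auto simp: Mword_app Mword_Cons\<close>)
  have "Meq n w (s @ (b+mc) # F n (n-c))" by (rule w2)
  also have "Meq n \<dots> ((t @ [a+mb] @ F n k) @ (b+mc) # F n (n-c))"
    using Meq_appR[OF s2] by simp
  also have "Meq n \<dots> (t @ [a+mb] @ replicate (k+1) n @ F n (n-c))"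
  proof -
    have "Meq n (F n (k+1-1) @ [n+1-(k+1)]) (replicate (k+1) n)" using ar by (intro FB) auto
    moreover have "n+1-(k+1) = b + mc" using ar by simp
    ultimately have "Meq n (F n k @ [b+mc]) (replicate (k+1) n)" by simp
    then show ?thesis by (rule Meq_ctx'[where a="t @ [a+mb]" and b="F n (n-c)"]) simp_all
  qed
  also have "Meq n \<dots> (t @ (F n (k+1) @ [a+mc]) @ F n (n-c))"
  proof -
    have "Meq n (F n (k+1) @ [a+mc]) ((a+mc+(k+1)) # replicate (k+1) n)" using ar o by (intro FA) auto
    then have "Meq n (F n (k+1) @ [a+mc]) ((a+mb) # replicate (k+1) n)" by (simp only: ar(4))
    then have "Meq n ((a+mb) # replicate (k+1) n) (F n (k+1) @ [a+mc])" by (rule Meq.sym)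
    then show ?thesis by (rule Meq_ctx'[where a="t" and b="F n (n-c)"]) simp_all
  qed
  finally have w3: "Meq n w ((t @ F n (k+1)) @ (a + (n+1-c)) # F n (n-c))" by (simp add: mc_def)
  have "Meq n u (t @ F n mb)" by (rule u1)
  also have "Meq n \<dots> (t @ F n (k+1) @ F n mc)"
  proof -
    have "Meq n (F n (k+1) @ F n mc) (F n (k+1+mc))" using FF[of "k+1" mc n] ar by simp
    then have "Meq n (F n (k+1) @ F n mc) (F n mb)" by (simp only: ar(2)[symmetric])
    then have "Meq n (F n mb) (F n (k+1) @ F n mc)" by (rule Meq.sym)
    then show ?thesis by (rule Meq_ctx'[where a=t and b="[]"]) simp_all
  qed
  finally have u3: "Meq n u ((t @ F n (k+1)) @ F n (n+1-c))" by (simp add: mc_def)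
  have "a < c" using o by simp
  then show ?thesis unfolding cR_def using u3 w3 by blast
qed


lemma R5:
  assumes mv: "Mword n v" and wv: "sum_list v < W"
    and ab: "cR n a u b v" and bc: "cR n b v c w" and o: "1 \<le> a" "a < b" "c < b" "a < c" "b \<le> n"
  shows "cR n a u c w"
proof -
  define mb where "mb = n+1-b"
  from ab o obtain t where u1: "Meq n u (t @ F n mb)" and v1: "Meq n v (t @ (a+mb) # F n (n-b))"
    unfolding cR_def mb_def by auto
  from bc o obtain s where w2: "Meq n w (s @ F n mb)" and v2: "Meq n v (s @ (c+mb) # F n (n-b))"
    unfolding cR_def mb_def by auto
  have e: "Meq n ((t @ [a+mb]) @ F n (n-b)) ((s @ [c+mb]) @ F n (n-b))"
    using Meq.trans[OF Meq.sym[OF v1] v2] by simp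
  have m1: "Mword n ((t @ [a+mb]) @ F n (n-b))" using Meq_word[OF v1 mv] by simp
  have s1: "sum_list ((t @ [a+mb]) @ F n (n-b)) < W" using Meq_sum[OF v1] wv by simp
  have e2: "Meq n (t @ [a+mb]) (s @ [c+mb])" using can[OF m1 s1 e] .
  have m2: "Mword n (t @ [a+mb])" using m1 by (simp only: Mword_app)
  have s2: "sum_list (t @ [a+mb]) < W" using s1 by simp
  have c1: "cR n (a+mb) t (c+mb) s" using IH[OF m2 s2 e2] by simp
  define m' where "m' = n+1-(c+mb)"
  have ar: "a + mb < c + mb" "m' + mb = n+1-c" "a+mb+m' = a+(n+1-c)" "n-(c+mb) + mb = n - c"
      "m' + mb \<le> n" "n-(c+mb) + mb \<le> n" "n - (c+mb) = m' - 1" "1 \<le> m'"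
    using o unfolding mb_def m'_def by auto
  from c1 ar(1) obtain r where t2: "Meq n t (r @ F n (n+1-(c+mb)))" and s3: "Meq n s (r @ (a+mb+(n+1-(c+mb))) # F n (n-(c+mb)))"
    unfolding cR_def by auto
  note t2 = t2[folded m'_def] and s3 = s3[folded m'_def]
  have "Meq n u (t @ F n mb)" by (rule u1)
  also have "Meq n \<dots> (r @ F n m' @ F n mb)" using Meq_appR[OF t2, of "F n mb"] by simp
  also have "Meq n \<dots> (r @ F n (n+1-c))"
  proof -
    have "Meq n (F n m' @ F n mb) (F n (m'+mb))" using FF[of m' mb n] ar by simp
    then have "Meq n (F n m' @ F n mb) (F n (n+1-c))" by (simp only: ar(2))
    then show ?thesis by (rule Meq_ctx'[where a=r and b="[]"]) simp_all
  qed
  finally have u3: "Meq n u (r @ F n (n+1-c))" .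
  have "Meq n w (s @ F n mb)" by (rule w2)
  also have "Meq n \<dots> (r @ (a+mb+m') # F n (n-(c+mb)) @ F n mb)" using Meq_appR[OF s3, of "F n mb"] by simp
  also have "Meq n \<dots> (r @ (a+(n+1-c)) # F n (n-c))"
  proof -
    have "Meq n (F n (n-(c+mb)) @ F n mb) (F n (n-(c+mb)+mb))" using FF[of "n-(c+mb)" mb n] ar by simp
    then have "Meq n (F n (n-(c+mb)) @ F n mb) (F n (n-c))" by (simp only: ar(4))
    then have "Meq n ([a+mb+m'] @ F n (n-(c+mb)) @ F n mb) ([a+mb+m'] @ F n (n-c))"
      by (rule Meq_appL)
    then have "Meq n ([a+mb+m'] @ F n (n-(c+mb)) @ F n mb) ([a+(n+1-c)] @ F n (n-c))"
      by (simp only: ar(3))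
    then show ?thesis by (rule Meq_ctx'[where a=r and b="[]"]) simp_all
  qed
  finally have w3: "Meq n w (r @ (a+(n+1-c)) # F n (n-c))" .
  show ?thesis unfolding cR_def using o u3 w3 by blast
qed

lemma R5e:
  assumes mv: "Mword n v" and wv: "sum_list v < W"
    and ab: "cR n a u b v" and bc: "cR n b v a w" and o: "a < b"
  shows "cR n a u a w"
proof -
  define mb where "mb = n+1-b"
  from ab o obtain t where u1: "Meq n u (t @ F n mb)" and v1: "Meq n v (t @ (a+mb) # F n (n-b))"
    unfolding cR_def mb_def by auto
  from bc o obtain s where w2: "Meq n w (s @ F n mb)" and v2: "Meq n v (s @ (a+mb) # F n (n-b))"
    unfolding cR_def mb_def by auto
  have m1: "Mword n (t @ (a+mb) # F n (n-b))" using Meq_word[OF v1 mv] .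
  have s1: "sum_list (t @ (a+mb) # F n (n-b)) < W" using Meq_sum[OF v1] wv by simp
  have "Meq n t s" using can[OF m1 s1 Meq.trans[OF Meq.sym[OF v1] v2]] .
  then have "Meq n u w" using Meq.trans[OF u1 Meq.trans[OF Meq_appR[OF \<open>Meq n t s\<close>] Meq.sym[OF w2]]] by simp
  then show ?thesis unfolding cR_def by auto
qed

lemma R6:
  assumes mv: "Mword n v" and wv: "sum_list v < W"
    and ab: "cR n a u b v" and bc: "cR n b v c w" and o: "1 \<le> b" "b < a" "b < c" "a < c" "c \<le> n"
  shows "cR n a u c w"
proof -
  define ma where "ma = n+1-a"
  define mc where "mc = n+1-c"
  define k where "k = c-a"
  from ab o obtain t where v1: "Meq n v (t @ F n ma)" and u1: "Meq n u (t @ (b+ma) # F n (n-a))"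
    unfolding cR_def ma_def by auto
  from bc o obtain s where v2: "Meq n v (s @ F n mc)" and w2: "Meq n w (s @ (b+mc) # F n (n-c))"
    unfolding cR_def mc_def by auto
  have ar: "ma = mc + k" "1 \<le> mc" "mc + k \<le> n" "b + mc + k = b + ma" "b + ma \<le> n" "1 \<le> k" "k \<le> n"
     "n+1-k = a + mc" "k - 1 + mc = n - a" "n - c = mc - 1" "1 \<le> b + mc"
    using o unfolding ma_def mc_def k_def by auto
  have F1: "F n ma = (mc + k) # replicate k n @ replicate mc n"
  proof -
    have "replicate ma n = replicate k n @ replicate mc n"
      by (metis ar(1) add.commute replicate_add)
    moreover have "ma \<noteq> 0" using ar by simp
    ultimately show ?thesis using ar(1) by (simp add: F_def)
  qed
  have F2: "F n mc = mc # replicate mc n" using ar by (simp add: F_def)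
  have e: "Meq n ((t @ (mc + k) # replicate k n) @ replicate mc n) ((s @ [mc]) @ replicate mc n)"
    using Meq.trans[OF Meq.sym[OF v1] v2] F1 F2 by simp
  have m1: "Mword n ((t @ (mc + k) # replicate k n) @ replicate mc n)"
    using Meq_word[OF v1 mv] F1 by simp
  have s1: "sum_list ((t @ (mc + k) # replicate k n) @ replicate mc n) < W"
    using Meq_sum[OF v1] wv F1 by simp
  have e2: "Meq n (t @ (mc + k) # replicate k n) (s @ [mc])" using can[OF m1 s1 e] .
  have s2: "Meq n s (t @ F n k)"
    by (rule it[of mc k]) (use ar e2 m1 s1 in \<open>auto simp: Mword_app Mword_Cons\<close>)
  have "Meq n w (s @ (b+mc) # F n (n-c))" by (rule w2)
  also have "Meq n \<dots> (t @ (F n k @ [b+mc]) @ F n (n-c))"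
    using Meq_appR[OF s2, of "(b+mc) # F n (n-c)"] by simp
  also have "Meq n \<dots> (t @ ((b+ma) # replicate k n) @ F n (n-c))"
  proof -
    have "Meq n (F n k @ [b+mc]) ((b+mc+k) # replicate k n)" using ar by (intro FA) auto
    then have "Meq n (F n k @ [b+mc]) ((b+ma) # replicate k n)" by (simp only: ar(4))
    then show ?thesis by (rule Meq_ctx'[where a=t and b="F n (n-c)"]) simp_all
  qed
  also have "Meq n \<dots> (t @ ((b+ma) # F n (k-1) @ [a+mc]) @ F n (n-c))"
  proof -
    have "Meq n (F n (k-1) @ [n+1-k]) (replicate k n)" using ar by (intro FB) auto
    then have "Meq n (replicate k n) (F n (k-1) @ [a+mc])" by (simp only: ar(8)) (rule Meq.sym)
    then show ?thesis by (rule Meq_ctx'[where a="t @ [b+ma]" and b="F n (n-c)"]) simp_all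
  qed
  finally have w3: "Meq n w ((t @ (b+ma) # F n (k-1)) @ (a + (n+1-c)) # F n (n-c))" by (simp add: mc_def)
  have "Meq n u (t @ (b+ma) # F n (n-a))" by (rule u1)
  also have "Meq n \<dots> (t @ (b+ma) # F n (k-1) @ F n mc)"
  proof -
    have "Meq n (F n (k-1) @ F n mc) (F n (k-1+mc))" using FF[of "k-1" mc n] ar by simp
    then have "Meq n (F n (n-a)) (F n (k-1) @ F n mc)" by (simp only: ar(9)) (rule Meq.sym)
    then show ?thesis by (rule Meq_ctx'[where a="t @ [b+ma]" and b="[]"]) simp_all
  qed
  finally have u3: "Meq n u ((t @ (b+ma) # F n (k-1)) @ F n (n+1-c))" by (simp add: mc_def)
  show ?thesis unfolding cR_def using o u3 w3 by blast
qed

lemma R6e: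
  assumes mv: "Mword n v" and wv: "sum_list v < W"
    and ab: "cR n a u b v" and bc: "cR n b v a w" and o: "b < a"
  shows "cR n a u a w"
proof -
  define ma where "ma = n+1-a"
  from ab o obtain t where v1: "Meq n v (t @ F n ma)" and u1: "Meq n u (t @ (b+ma) # F n (n-a))"
    unfolding cR_def ma_def by auto
  from bc o obtain s where v2: "Meq n v (s @ F n ma)" and w2: "Meq n w (s @ (b+ma) # F n (n-a))"
    unfolding cR_def ma_def by auto
  have m1: "Mword n (t @ F n ma)" using Meq_word[OF v1 mv] .
  have s1: "sum_list (t @ F n ma) < W" using Meq_sum[OF v1] wv by simp
  have "Meq n t s" using can[OF m1 s1 Meq.trans[OF Meq.sym[OF v1] v2]] .
  then have "Meq n u w" using Meq.trans[OF u1 Meq.trans[OF Meq_appR[OF \<open>Meq n t s\<close>] Meq.sym[OF w2]]] by simp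
  then show ?thesis unfolding cR_def by auto
qed

lemma transR:
  assumes mv: "Mword n v" and wv: "sum_list v < W"
    and ab: "cR n a u b v" and bc: "cR n b v c w" and r: "1 \<le> a" "1 \<le> b" "1 \<le> c" "a \<le> n" "b \<le> n" "c \<le> n"
  shows "cR n a u c w"
proof (cases a b rule: linorder_cases)
  case equal then show ?thesis using ab bc cR_congL cR_eq by blast
next
  case less
  show ?thesis
  proof (cases b c rule: linorder_cases)
    case less2: less then show ?thesis using R3[OF mv wv ab bc] less r by auto
  next
    case equal then show ?thesis using ab bc cR_congR cR_eq cR_sym by metis
  next
    case greater
    show ?thesis
    proof (cases a c rule: linorder_cases)
      case less3: less then show ?thesis using R5[OF mv wv ab bc] less greater r by auto
    next
      case equal then show ?thesis using R5e[OF mv wv ab] bc less by auto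
    next
      case greater3: greater then show ?thesis using cR_sym[OF R5[OF mv wv cR_sym[OF bc] cR_sym[OF ab]]] less greater r by auto
    qed
  qed
next
  case greater
  show ?thesis
  proof (cases b c rule: linorder_cases)
    case less2: less
    show ?thesis
    proof (cases a c rule: linorder_cases)
      case less3: less then show ?thesis using R6[OF mv wv ab bc] less2 greater r by auto
    next
      case equal then show ?thesis using R6e[OF mv wv ab] bc greater by auto
    next
      case greater3: greater then show ?thesis using cR_sym[OF R6[OF mv wv cR_sym[OF bc] cR_sym[OF ab]]] less2 greater r by auto
    qed
  next
    case equal then show ?thesis using ab bc cR_congR cR_eq cR_sym by metis
  next
    case greater2: greater then show ?thesis using cR_sym[OF R3[OF mv wv cR_sym[OF bc] cR_sym[OF ab]]] greater r by auto
  qed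
qed

end


lemma mainR_step:
  assumes IHW0: "\<forall>x y a u b v. Mword n x \<longrightarrow> sum_list x < W \<longrightarrow> Meq n x y \<longrightarrow> x = u@[a] \<longrightarrow> y = v@[b] \<longrightarrow> cR n a u b v"
  shows "Meq n x y \<Longrightarrow> Mword n x \<Longrightarrow> sum_list x = W \<Longrightarrow> (\<forall>a u b v. x = u@[a] \<longrightarrow> y = v@[b] \<longrightarrow> cR n a u b v)"
proof (induction rule: Meq.induct)
  case (step l r u' v')
  then obtain i where lr: "l = [1,n,i]" "r = [i+1,n]" "1 \<le> i" "i \<le> n - 1" by (auto simp: Mrel_def)
  show ?case
  proof (intro allI impI)
    fix a u b v assume x: "u' @ l @ v' = u @ [a]" and y: "u' @ r @ v' = v @ [b]"
    show "cR n a u b v"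
    proof (cases v' rule: rev_exhaust)
      case Nil
      then have "a = i" "u = u' @ [1,n]" "b = n" "v = u' @ [i+1]" using x y lr by auto
      moreover have "F n (n+1-n) = [1,n]" "F n (n-n) = []" by (simp_all add: F_def)
      ultimately show ?thesis unfolding cR_def using lr by (auto intro: Meq.refl)
    next
      case (snoc v'' d)
      then have "a = d" "b = d" "u = u' @ l @ v''" "v = u' @ r @ v''" using x y by auto
      moreover have "Meq n (u' @ l @ v'') (u' @ r @ v'')" by (rule Meq.step[OF step.hyps])
      ultimately show ?thesis unfolding cR_def by auto
    qed
  qed
next
  case (refl w)
  then show ?case unfolding cR_def by (auto intro: Meq.refl)
next
  case (sym u0 v0)
  have "Mword n u0" using Meq_word[OF Meq.sym[OF sym.hyps] sym.prems(1)] .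
  moreover have "sum_list u0 = W" using Meq_sum[OF sym.hyps] sym.prems(2) by simp
  ultimately show ?case using sym.IH cR_sym by blast
next
  case (trans u0 v0 w0)
  have mv0: "Mword n v0" using Meq_word[OF trans.hyps(1) trans.prems(1)] .
  have sv0: "sum_list v0 = W" using Meq_sum[OF trans.hyps(1)] trans.prems(2) by simp
  show ?case
  proof (intro allI impI)
    fix a u c w assume x: "u0 = u @ [a]" and z: "w0 = w @ [c]"
    have "1 \<le> a" using trans.prems(1) x by (simp add: Mword_app Mword_Cons)
    then have "W > 0" using trans.prems(2) x by simp
    then obtain b v where v0: "v0 = v @ [b]" using sv0 by (cases v0 rule: rev_exhaust) auto
    have ab: "cR n a u b v" using trans.IH(1) trans.prems x v0 by blast
    have bc: "cR n b v c w" using trans.IH(2) mv0 sv0 z v0 by blast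
    have mz: "Mword n w0" using Meq_word[OF trans.hyps(2) mv0] .
    interpret RIH n W using IHW0 by unfold_locales blast
    show "cR n a u c w"
      by (rule transR[OF _ _ ab bc]) (use mv0 sv0 v0 trans.prems(1) x mz z in \<open>auto simp: Mword_app Mword_Cons\<close>)
  qed
qed

lemma mainR: "Mword n x \<Longrightarrow> Meq n x y \<Longrightarrow> x = u@[a] \<Longrightarrow> y = v@[b] \<Longrightarrow> cR n a u b v"
proof (induction "sum_list x" arbitrary: x y a u b v rule: less_induct)
  case less
  have IHW: "\<forall>x' y' a' u' b' v'. Mword n x' \<longrightarrow> sum_list x' < sum_list x \<longrightarrow> Meq n x' y' \<longrightarrow> x' = u'@[a'] \<longrightarrow> y' = v'@[b'] \<longrightarrow> cR n a' u' b' v'"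
    using less.hyps by blast
  show ?case using mainR_step[where W="sum_list x", OF IHW less.prems(2,1)] less.prems(3,4) by blast
qed

lemma G: "1 \<le> i \<Longrightarrow> i \<le> n \<Longrightarrow> Meq n (i # replicate (i-1) n) (concat (replicate (i-1) [1,n]) @ [1])"
proof (induction i)
  case 0 then show ?case by simp
next
  case (Suc i)
  show ?case
  proof (cases "i = 0")
    case True then show ?thesis by (simp add: Meq.refl)
  next
    case False
    have "Suc i # replicate (Suc i - 1) n = [] @ [i+1, n] @ replicate (i-1) n"
      using False by (cases i) auto
    also have "Meq n \<dots> ([] @ [1,n,i] @ replicate (i-1) n)"
      by (rule Meq.sym, rule rel1) (insert False Suc.prems, auto)
    also have "\<dots> = [1,n] @ (i # replicate (i-1) n)" by simp
    also have "Meq n \<dots> ([1,n] @ (concat (replicate (i-1) [1,n]) @ [1]))"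
      using Suc False by (intro Meq_appL) auto
    also have "\<dots> = concat (replicate (Suc i - 1) [1,n]) @ [1]"
      using False by (cases i) auto
    finally show ?thesis .
  qed
qed

lemma concat_swap: "[1] @ concat (replicate k [n,1]) = concat (replicate k [1,n]) @ [(1::nat)]"
  by (induction k) auto

theorem corollary4p16:
  fixes n :: nat
  assumes "n \<ge> 1"
  shows "is_right_lcm n {[i] | i. 1 \<le> i \<and> i \<le> n} (replicate n n)
       \<and> is_left_lcm n {[i] | i. 1 \<le> i \<and> i \<le> n} (replicate n n)
       \<and> Meq n (replicate n n) ([1] @ concat (replicate (n - 1) [n, 1]))"
proof (intro conjI)
  have MD: "Mword n (replicate n n)" using assms by (auto simp: Mword_def)
  have Pn: "replicate n n = n # replicate (n-1) n" using assms by (cases n) auto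
  show "Meq n (replicate n n) ([1] @ concat (replicate (n - 1) [n, 1]))"
    using G[of n n] assms Pn concat_swap[of "n-1" n] by simp
  show "is_right_lcm n {[i] | i. 1 \<le> i \<and> i \<le> n} (replicate n n)"
    unfolding is_right_lcm_def
  proof (intro conjI ballI allI impI)
    show "Mword n (replicate n n)" by (rule MD)
  next
    fix s assume "s \<in> {[i] | i. 1 \<le> i \<and> i \<le> n}"
    then obtain i where s: "s = [i]" "1 \<le> i" "i \<le> n" by auto
    show "Mldiv n s (replicate n n)"
    proof (cases "i = n")
      case True
      then show ?thesis unfolding Mldiv_def using s Pn
        by (intro exI[of _ "replicate (n-1) n"]) (auto simp: Mword_def Meq.refl)
    next
      case False
      then have iln: "i < n" using s by simp
      have "Meq n (i # replicate i n @ [n-i]) (n # replicate i n)" using s iln by (intro R) auto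
      then have "Meq n ((i # replicate i n @ [n-i]) @ replicate (n-1-i) n) ((n # replicate i n) @ replicate (n-1-i) n)"
        by (rule Meq_appR)
      moreover have "(n # replicate i n) @ replicate (n-1-i) n = replicate n n"
        using iln Pn by (simp add: replicate_add[symmetric])
      ultimately have "Meq n (s @ (replicate i n @ [n-i] @ replicate (n-1-i) n)) (replicate n n)"
        using s by simp
      moreover have "Mword n (replicate i n @ [n-i] @ replicate (n-1-i) n)" using iln s by (auto simp: Mword_def)
      ultimately show ?thesis unfolding Mldiv_def by blast
    qed
  next
    fix m' assume h: "Mword n m' \<and> (\<forall>s\<in>{[i] | i. 1 \<le> i \<and> i \<le> n}. Mldiv n s m')"
    show "Mldiv n (replicate n n) m'"
    proof (cases "n = 1")
      case True
      then show ?thesis using h by auto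
    next
      case False
      then have n2: "n \<ge> 2" using assms by simp
      have "Mldiv n [n-1] m'" "Mldiv n [n] m'" using h n2 by auto
      then obtain c1 c2 where c1: "Mword n c1" "Meq n ([n-1] @ c1) m'" and c2: "Mword n c2" "Meq n ([n] @ c2) m'"
        unfolding Mldiv_def by blast
      have mx: "Mword n ((n-1) # c1)" using c1 n2 by (simp add: Mword_Cons)
      have "cL n (n-1) c1 n c2" using mainL[OF mx Meq.trans[OF _ Meq.sym[OF c2(2)]]] c1 by simp
      then obtain t where t1: "Meq n c2 (replicate (n-1) n @ t)"
        using n2 unfolding cL_def by auto
      have "Mword n t" using Meq_word[OF t1 c2(1)] by (simp add: Mword_app)
      moreover have "Meq n (replicate n n @ t) m'"
      proof -
        have "Meq n (n # c2) (n # (replicate (n-1) n @ t))" by (rule Meq_Cons[OF t1])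
        then have "Meq n (n # c2) (replicate n n @ t)" using Pn by simp
        then show ?thesis using c2(2) by (metis Meq.sym Meq.trans append_Cons append_Nil)
      qed
      ultimately show ?thesis unfolding Mldiv_def by blast
    qed
  qed
  show "is_left_lcm n {[i] | i. 1 \<le> i \<and> i \<le> n} (replicate n n)"
    unfolding is_left_lcm_def
  proof (intro conjI ballI allI impI)
    show "Mword n (replicate n n)" by (rule MD)
  next
    fix s assume "s \<in> {[i] | i. 1 \<le> i \<and> i \<le> n}"
    then obtain i where s: "s = [i]" "1 \<le> i" "i \<le> n" by auto
    show "Mrdiv n s (replicate n n)"
    proof (cases "i = n")
      case True
      have "replicate (n-1) n @ [n] = replicate n n" using assms
        by (metis Pn replicate_append_same)
      then show ?thesis unfolding Mrdiv_def using s True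
        by (intro exI[of _ "replicate (n-1) n"]) (auto simp: Mword_def Meq.refl)
    next
      case False
      then have iln: "i < n" using s by simp
      have "Meq n ((n-i) # replicate (n-i) n @ [n-(n-i)]) (n # replicate (n-i) n)" using s iln by (intro R) auto
      then have "Meq n (replicate (i-1) n @ ((n-i) # replicate (n-i) n @ [i])) (replicate (i-1) n @ (n # replicate (n-i) n))"
        using s iln by (intro Meq_appL) simp
      moreover have "replicate (i-1) n @ (n # replicate (n-i) n) = replicate n n"
      proof -
        have "replicate (i-1) n @ (n # replicate (n-i) n) = replicate (i-1) n @ replicate (Suc (n-i)) n" by simp
        also have "\<dots> = replicate (i - 1 + Suc (n-i)) n" by (simp only: replicate_add)
        also have "i - 1 + Suc (n-i) = n" using s iln by simp
        finally show ?thesis .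
      qed
      ultimately have "Meq n ((replicate (i-1) n @ [n-i] @ replicate (n-i) n) @ s) (replicate n n)"
        using s by simp
      moreover have "Mword n (replicate (i-1) n @ [n-i] @ replicate (n-i) n)" using iln s by (auto simp: Mword_def)
      ultimately show ?thesis unfolding Mrdiv_def by blast
    qed
  next
    fix m' assume h: "Mword n m' \<and> (\<forall>s\<in>{[i] | i. 1 \<le> i \<and> i \<le> n}. Mrdiv n s m')"
    show "Mrdiv n (replicate n n) m'"
    proof (cases "n = 1")
      case True
      then show ?thesis using h by auto
    next
      case False
      then have n2: "n \<ge> 2" using assms by simp
      have "Mrdiv n [1] m'" "Mrdiv n [2] m'" using h n2 by auto
      then obtain c1 c2 where c1: "Mword n c1" "Meq n (c1 @ [1]) m'" and c2: "Mword n c2" "Meq n (c2 @ [2]) m'"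
        unfolding Mrdiv_def by blast
      have mx: "Mword n (c1 @ [1])" using c1 n2 by (simp add: Mword_app Mword_Cons Mword_def)
      have "cR n 1 c1 2 c2" using mainR[OF mx Meq.trans[OF c1(2) Meq.sym[OF c2(2)]]] by simp
      then obtain t where t1: "Meq n c1 (t @ F n (n+1-2))"
        using n2 unfolding cR_def by auto
      have F1: "F n (n-1) = (n-1) # replicate (n-1) n" using n2 by (simp add: F_def)
      have "Mword n t" using Meq_word[OF t1 c1(1)] by (simp add: Mword_app)
      moreover have "Meq n (t @ replicate n n) m'"
      proof -
        have "Meq n (c1 @ [1]) ((t @ F n (n-1)) @ [1])" using Meq_appR[OF t1] by simp
        also have "Meq n \<dots> (t @ ((1 + (n-1)) # replicate (n-1) n))"
        proof -
          have "Meq n (F n (n-1) @ [1]) ((1 + (n-1)) # replicate (n-1) n)" using n2 by (intro FA) auto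
          then show ?thesis by (rule Meq_ctx'[where a=t and b="[]"]) simp_all
        qed
        also have "\<dots> = t @ replicate n n" using Pn n2 by simp
        finally show ?thesis using c1(2) by (metis Meq.sym Meq.trans)
      qed
      ultimately show ?thesis unfolding Mrdiv_def by blast
    qed
  qed
qed

end
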